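(* Let $n\in\mathbb{Z}$ and let $x^n$ denote the $n$-th power of the invertible dot $x$ in $\mathrm{QAW}(A;z)$ (so $x^n$ is a power of $x^{-1}$ if $n<0$). In $\mathrm{End}_{\mathrm{QAW}(A;z)}(\uparrow\otimes\uparrow)$ the following hold, where $T:=z\sum_{b\in B_A}\tau_b\otimes\tau_{b^\vee}$: (i) $S\circ(1\otimes x^n)=(x^n\otimes 1)\circ S^- -\sum_{r+s=n,\ r,s>0}(x^r\otimes x^s)\circ T$ if $n>0$, and $S\circ(1\otimes x^n)=(x^n\otimes 1)\circ S^- +\sum_{r+s=n,\ r,s\le 0}(x^r\otimes x^s)\circ T$ if $n\le 0$; (ii) $S\circ(x^n\otimes 1)=(1\otimes x^n)\circ S^- +\sum_{r+s=n,\ r,s\ge 0}(x^r\otimes x^s)\circ T$ if $n\ge 0$, and $S\circ(x^n\otimes 1)=(1\otimes x^n)\circ S^- -\sum_{r+s=n,\ r,s<0}(x^r\otimes x^s)\circ T$ if $n<0$; (iii) $S^-\circ(x^n\otimes 1)=(1\otimes x^n)\circ S +\sum_{r+s=n,\ r,s>0}(x^r\otimes x^s)\circ T$ if $n>0$, and $S^-\circ(x^n\otimes 1)=(1\otimes x^n)\circ S -\sum_{r+s=n,\ r,s\le 0}(x^r\otimes x^s)\circ T$ if $n\le 0$; (iv) $S^-\circ(1\otimes x^n)=(x^n\otimes 1)\circ S -\sum_{r+s=n,\ r,s\ge 0}(x^r\otimes x^s)\circ T$ if $n\ge 0$, and $S^-\circ(1\otimes x^n)=(x^n\otimes 1)\circ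 S +\sum_{r+s=n,\ r,s<0}(x^r\otimes x^s)\circ T$ if $n<0$. (All sums are over pairs of integers $(r,s)$.)
   Context: Let $\Bbbk$ be a commutative ring, $z\in\Bbbk^\times$, and $A$ a symmetric Frobenius superalgebra over $\Bbbk$: it has an even trace $\mathrm{tr}:A\to\Bbbk$ with $\mathrm{tr}(ab)=(-1)^{\bar a\bar b}\mathrm{tr}(ba)$, a homogeneous basis $B_A$ and a left dual basis $\{b^\vee\}$ with $\mathrm{tr}(b^\vee c)=\delta_{b,c}$. Monoidal supercategories satisfy the super interchange law $(f'\otimes g)\circ(f\otimes g')=(-1)^{\bar f\bar g}(f'\circ f)\otimes(g\circ g')$. The quantum affine wreath product category $\mathrm{QAW}(A;z)$ is the strict $\Bbbk$-linear monoidal supercategory generated by one object $\uparrow$ and morphisms: even $S,S^-:\uparrow\otimes\uparrow\to\uparrow\otimes\uparrow$ (positive and negative crossing), $\tau_a:\uparrow\to\uparrow$ of parity $\bar a$ for $a\in A$ (tokens), and an even invertible $x:\uparrow\to\uparrow$ (dot), subject to: $a\mapsto\tau_a$ is a unital superalgebra homomorphism $A\to\mathrm{End}(\uparrow)$; $S\circ S^-=S^-\circ S=1_{\uparrow\otimes\uparrow}$; $(S\otimes 1)(1\otimes S)(S\otimes 1)=(1\otimes S)(S\otimes 1)(1\otimes S)$; $S\circ(\tau_a\otimes 1)=(1\otimes\tau_a)\circ S$ and $S^-\circ(\tau_a\otimes 1)=(1\otimes\tau_a)\circ S^-$; $S-S^-=z\sum_{b\in B_A}\tau_b\otimes\tau_{b^\vee}$;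 $x\circ\tau_a=\tau_a\circ x$; $S\circ(1\otimes x)=(x\otimes1)\circ S^-$ and $S^-\circ(x\otimes 1)=(1\otimes x)\circ S$. *)

theory Defs
  imports Complex_Main
begin

locale super_module = module scale
  for scale :: "'k::comm_ring_1 \<Rightarrow> 'v::ab_group_add \<Rightarrow> 'v" +
  fixes gr :: "bool \<Rightarrow> 'v set"  (* gr False = even part, gr True = odd part *)
  assumes gr_subspace: "subspace (gr i)"
    and gr_direct: "gr False \<inter> gr True = {0}"
    and gr_sum: "\<forall>v. \<exists>v0 v1. v0 \<in> gr False \<and> v1 \<in> gr True \<and> v = v0 + v1"

locale superalgebra = super_module scale gr
  for scale :: "'k::comm_ring_1 \<Rightarrow> 'a::ring_1 \<Rightarrow> 'a" and gr +
  assumes scale_mult_left: "scale c a * b = scale c (a * b)"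
    and scale_mult_right: "a * scale c b = scale c (a * b)"
    and one_even: "1 \<in> gr False"
    and gr_mult: "a \<in> gr i \<Longrightarrow> b \<in> gr j \<Longrightarrow> a * b \<in> gr (i \<noteq> j)"

locale symmetric_frobenius_superalgebra = superalgebra scale gr
  for scale :: "'k::comm_ring_1 \<Rightarrow> 'a::ring_1 \<Rightarrow> 'a" and gr +
  fixes tr :: "'a \<Rightarrow> 'k" and B :: "'a set" and dual :: "'a \<Rightarrow> 'a"
  assumes tr_add: "tr (a + b) = tr a + tr b"
    and tr_scale: "tr (scale c a) = c * tr a"
    and tr_even: "a \<in> gr True \<Longrightarrow> tr a = 0"
    and tr_symm: "a \<in> gr i \<Longrightarrow> b \<in> gr j \<Longrightarrow>
                  tr (a * b) = (if i \<and> j then - tr (b * a) else tr (b * a))"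
    and B_finite: "finite B"
    and B_independent: "independent B"
    and B_span: "span B = UNIV"
    and B_homogeneous: "B \<subseteq> gr False \<union> gr True"
    and dual_basis: "b1 \<in> B \<Longrightarrow> b2 \<in> B \<Longrightarrow> tr (dual b1 * b2) = (if b1 = b2 then 1 else 0)"

text \<open>A k-linear category with objects the natural numbers is encoded by the
  k-module of all morphisms (direct sum of all Hom-spaces), with identities
  idn n, composition cmp (cmp f g = f after g, zero when not composable)
  and tensor product tns.  Object n stands for the n-th tensor power of the
  generating object.\<close>

definition hom :: "('m \<Rightarrow> 'm \<Rightarrow> 'm) \<Rightarrow> (nat \<Rightarrow> 'm) \<Rightarrow> nat \<Rightarrow> nat \<Rightarrow> 'm set" where
  "hom cmp idn m n = {f. cmp (idn n) f = f \<and> cmp f (idn m) = f}"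

locale strict_monoidal_supercat = super_module scale gr
  for scale :: "'k::comm_ring_1 \<Rightarrow> 'm::ab_group_add \<Rightarrow> 'm" and gr +
  fixes idn :: "nat \<Rightarrow> 'm" and cmp :: "'m \<Rightarrow> 'm \<Rightarrow> 'm" and tns :: "'m \<Rightarrow> 'm \<Rightarrow> 'm"
  assumes cmp_add_left: "cmp (f + g) h = cmp f h + cmp g h"
    and cmp_add_right: "cmp f (g + h) = cmp f g + cmp f h"
    and cmp_scale_left: "cmp (scale k f) g = scale k (cmp f g)"
    and cmp_scale_right: "cmp f (scale k g) = scale k (cmp f g)"
    and cmp_assoc: "cmp (cmp f g) h = cmp f (cmp g h)"
    and idn_orth: "cmp (idn m) (idn n) = (if m = n then idn m else 0)"
    and idn_even: "idn n \<in> gr False"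
    and cmp_gr: "f \<in> gr i \<Longrightarrow> g \<in> gr j \<Longrightarrow> cmp f g \<in> gr (i \<noteq> j)"
    and tns_add_left: "tns (f + g) h = tns f h + tns g h"
    and tns_add_right: "tns f (g + h) = tns f g + tns f h"
    and tns_scale_left: "tns (scale k f) g = scale k (tns f g)"
    and tns_scale_right: "tns f (scale k g) = scale k (tns f g)"
    and tns_assoc: "tns (tns f g) h = tns f (tns g h)"
    and tns_idn: "tns (idn m) (idn n) = idn (m + n)"
    and tns_unit_left: "tns (idn 0) f = f"
    and tns_unit_right: "tns f (idn 0) = f"
    and tns_gr: "f \<in> gr i \<Longrightarrow> g \<in> gr j \<Longrightarrow> tns f g \<in> gr (i \<noteq> j)"
    and tns_hom: "f \<in> hom cmp idn o1 o2 \<Longrightarrow> g \<in> hom cmp idn o3 o4 \<Longrightarrow>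
                  tns f g \<in> hom cmp idn (o1 + o3) (o2 + o4)"
    and super_interchange:
      "f \<in> hom cmp idn o1 o2 \<Longrightarrow> f' \<in> hom cmp idn o2 o3 \<Longrightarrow>
       g' \<in> hom cmp idn o4 o5 \<Longrightarrow> g \<in> hom cmp idn o5 o6 \<Longrightarrow>
       f \<in> gr i \<Longrightarrow> g \<in> gr j \<Longrightarrow>
       cmp (tns f' g) (tns f g') =
         (if i \<and> j then - tns (cmp f' f) (cmp g g') else tns (cmp f' f) (cmp g g'))"

text \<open>qaw_rep ... holds iff (S, Sm, tau, x) with inverse xinv of x are morphisms
  in a strict k-linear monoidal supercategory satisfying all defining
  relations of QAW(A;z) (object 1 = the generating object).  Since QAW(A;z) is
  the free such category, an identity holds in QAW(A;z) iff it holds for every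
  such qaw_rep.\<close>

locale qaw_rep =
  A: symmetric_frobenius_superalgebra ascale agr tr B dual +
  C: strict_monoidal_supercat mscale mgr idn cmp tns
  for ascale :: "'k::comm_ring_1 \<Rightarrow> 'a::ring_1 \<Rightarrow> 'a" and agr tr B dual
  and mscale :: "'k \<Rightarrow> 'm::ab_group_add \<Rightarrow> 'm" and mgr idn cmp tns +
  fixes z :: 'k and S Sm x xinv :: 'm and tau :: "'a \<Rightarrow> 'm"
  assumes z_unit: "z dvd 1"
    and S_hom: "S \<in> hom cmp idn 2 2" and S_even: "S \<in> mgr False"
    and Sm_hom: "Sm \<in> hom cmp idn 2 2" and Sm_even: "Sm \<in> mgr False"
    and tau_hom: "tau a \<in> hom cmp idn 1 1"
    and tau_gr: "a \<in> agr i \<Longrightarrow> tau a \<in> mgr i"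
    and tau_add: "tau (a + b) = tau a + tau b"
    and tau_scale: "tau (ascale c a) = mscale c (tau a)"
    and tau_mult: "tau (a * b) = cmp (tau a) (tau b)"
    and tau_one: "tau 1 = idn 1"
    and x_hom: "x \<in> hom cmp idn 1 1" and x_even: "x \<in> mgr False"
    and xinv_hom: "xinv \<in> hom cmp idn 1 1"
    and x_xinv: "cmp x xinv = idn 1" and xinv_x: "cmp xinv x = idn 1"
    and S_Sm: "cmp S Sm = idn 2" and Sm_S: "cmp Sm S = idn 2"
    and braid: "cmp (tns S (idn 1)) (cmp (tns (idn 1) S) (tns S (idn 1))) =
                cmp (tns (idn 1) S) (cmp (tns S (idn 1)) (tns (idn 1) S))"
    and S_tau: "cmp S (tns (tau a) (idn 1)) = cmp (tns (idn 1) (tau a)) S"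
    and Sm_tau: "cmp Sm (tns (tau a) (idn 1)) = cmp (tns (idn 1) (tau a)) Sm"
    and skein: "S - Sm = mscale z (\<Sum>b\<in>B. tns (tau b) (tau (dual b)))"
    and x_tau: "cmp x (tau a) = cmp (tau a) x"
    and S_x: "cmp S (tns (idn 1) x) = cmp (tns x (idn 1)) Sm"
    and Sm_x: "cmp Sm (tns x (idn 1)) = cmp (tns (idn 1) x) S"

definition mpow :: "('m \<Rightarrow> 'm \<Rightarrow> 'm) \<Rightarrow> 'm \<Rightarrow> 'm \<Rightarrow> 'm \<Rightarrow> int \<Rightarrow> 'm" where
  "mpow cmp one x xinv n =
     (if 0 \<le> n then ((cmp x) ^^ nat n) one else ((cmp xinv) ^^ nat (- n)) one)"

end

theory Submission
  imports Defs
begin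


definition psum :: "(int \<Rightarrow> int \<Rightarrow> 'm::ab_group_add) \<Rightarrow> int \<Rightarrow> (int \<Rightarrow> int \<Rightarrow> bool) \<Rightarrow> 'm" where
  "psum G n Q = (\<Sum>(r, s)\<in>{(r, s). r + s = n \<and> Q r s}. G r s)"

lemma psum_r: "psum G n Q = (\<Sum>r\<in>{r. Q r (n - r)}. G r (n - r))"
  unfolding psum_def
  by (rule sum.reindex_cong[where l = "\<lambda>r. (r, n - r)"]) (auto simp: inj_on_def image_def)

lemma psum_s: "psum G n Q = (\<Sum>s\<in>{s. Q (n - s) s}. G (n - s) s)"
  unfolding psum_def
  by (rule sum.reindex_cong[where l = "\<lambda>s. (n - s, s)"]) (auto simp: inj_on_def image_def)

lemma fin_int: "(\<And>r. Q r \<Longrightarrow> a \<le> r \<and> r \<le> b) \<Longrightarrow> finite {r::int. Q r}"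
  by (rule finite_subset[of _ "{a..b}"]) auto

definition E1 where "E1 G n = (if 0 < n then - psum G n (\<lambda>r s. 0 < r \<and> 0 < s) else psum G n (\<lambda>r s. r \<le> 0 \<and> s \<le> 0))"
definition E2 where "E2 G n = (if 0 \<le> n then psum G n (\<lambda>r s. 0 \<le> r \<and> 0 \<le> s) else - psum G n (\<lambda>r s. r < 0 \<and> s < 0))"
definition E3 where "E3 G n = (if 0 < n then psum G n (\<lambda>r s. 0 < r \<and> 0 < s) else - psum G n (\<lambda>r s. r \<le> 0 \<and> s \<le> 0))"
definition E4 where "E4 G n = (if 0 \<le> n then - psum G n (\<lambda>r s. 0 \<le> r \<and> 0 \<le> s) else psum G n (\<lambda>r s. r < 0 \<and> s < 0))"

lemma E1_up:
  fixes G :: "int \<Rightarrow> int \<Rightarrow> 'm::ab_group_add"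
  assumes "0 \<le> n" shows "E1 (\<lambda>r s. G r (s + 1)) n - G n 1 = E1 G (n + 1)"
proof (cases "n = 0")
  case True
  have e1: "\<And>f::int \<Rightarrow> 'm. sum f {r::int. r \<le> 0 \<and> 0 - r \<le> 0} = f 0"
  proof -
    fix f :: "int \<Rightarrow> 'm" have "{r::int. r \<le> 0 \<and> 0 - r \<le> 0} = {0}" by auto
    thus "sum f {r::int. r \<le> 0 \<and> 0 - r \<le> 0} = f 0" by simp
  qed
  have e2: "\<And>f::int \<Rightarrow> 'm. sum f {r::int. 0 < r \<and> 0 < 0 + 1 - r} = 0"
  proof -
    fix f :: "int \<Rightarrow> 'm" have "{r::int. 0 < r \<and> 0 < 0 + 1 - r} = {}" by auto
    thus "sum f {r::int. 0 < r \<and> 0 < 0 + 1 - r} = 0" by (simp only: sum.empty)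
  qed
  show ?thesis using True by (simp add: E1_def psum_r e1[simplified] e2[simplified])
next
  case False
  hence n: "0 < n" using assms by simp
  let ?A = "{r::int. 0 < r \<and> 0 < n - r}"
  let ?A' = "{r::int. 0 < r \<and> 0 < n + 1 - r}"
  have fin: "finite ?A" by (rule fin_int[of _ 0 n]) auto
  have ins: "?A' = insert n ?A" "n \<notin> ?A" using n by auto
  have L: "E1 (\<lambda>r s. G r (s + 1)) n = - (\<Sum>r\<in>?A. G r (n + 1 - r))"
    using n by (simp add: E1_def psum_r algebra_simps)
  have R: "E1 G (n + 1) = - (\<Sum>r\<in>?A'. G r (n + 1 - r))"
    using n by (simp add: E1_def psum_r)
  have I: "(\<Sum>r\<in>?A'. G r (n + 1 - r)) = G n 1 + (\<Sum>r\<in>?A. G r (n + 1 - r))"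
    unfolding ins(1) using sum.insert[OF fin ins(2), of "\<lambda>r. G r (n + 1 - r)"] by simp
  show ?thesis unfolding L R I by (simp add: algebra_simps)
qed

lemma E1_down:
  fixes G :: "int \<Rightarrow> int \<Rightarrow> 'm::ab_group_add"
  assumes n: "n \<le> 0" shows "E1 (\<lambda>r s. G r (s - 1)) n + G (n - 1) 0 = E1 G (n - 1)"
proof -
  let ?A = "{r::int. r \<le> 0 \<and> n - r \<le> 0}"
  let ?A' = "{r::int. r \<le> 0 \<and> n - 1 - r \<le> 0}"
  have fin: "finite ?A" by (rule fin_int[of _ "n" "0"]) auto
  have ins: "?A' = insert (n - 1) ?A" "(n - 1) \<notin> ?A" using n by auto
  have L: "E1 (\<lambda>r s. G r (s - 1)) n = (\<Sum>r\<in>?A. G r (n - 1 - r))"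
    using n by (simp add: E1_def psum_r algebra_simps)
  have R: "E1 G (n - 1) = (\<Sum>r\<in>?A'. G r (n - 1 - r))"
    using n by (simp add: E1_def psum_r algebra_simps)
  have I: "(\<Sum>r\<in>?A'. G r (n - 1 - r)) = G (n - 1) 0 + (\<Sum>r\<in>?A. G r (n - 1 - r))"
    unfolding ins(1) using sum.insert[OF fin ins(2), of "\<lambda>r. G r (n - 1 - r)"] by simp
  show ?thesis unfolding L R I by (simp add: algebra_simps)
qed

lemma E2_up:
  fixes G :: "int \<Rightarrow> int \<Rightarrow> 'm::ab_group_add"
  assumes n: "0 \<le> n" shows "E2 (\<lambda>r s. G (r + 1) s) n + G 0 (n + 1) = E2 G (n + 1)"
proof -
  let ?A = "{s::int. 0 \<le> n - s \<and> 0 \<le> s}"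
  let ?A' = "{s::int. 0 \<le> n + 1 - s \<and> 0 \<le> s}"
  have fin: "finite ?A" by (rule fin_int[of _ "0" "n"]) auto
  have ins: "?A' = insert (n + 1) ?A" "(n + 1) \<notin> ?A" using n by auto
  have L: "E2 (\<lambda>r s. G (r + 1) s) n = (\<Sum>s\<in>?A. G (n + 1 - s) s)"
    using n by (simp add: E2_def psum_s algebra_simps)
  have R: "E2 G (n + 1) = (\<Sum>s\<in>?A'. G (n + 1 - s) s)"
    using n by (simp add: E2_def psum_s algebra_simps)
  have I: "(\<Sum>s\<in>?A'. G (n + 1 - s) s) = G 0 (n + 1) + (\<Sum>s\<in>?A. G (n + 1 - s) s)"
    unfolding ins(1) using sum.insert[OF fin ins(2), of "\<lambda>s. G (n + 1 - s) s"] by simp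
  show ?thesis unfolding L R I by (simp add: algebra_simps)
qed

lemma E2_down:
  fixes G :: "int \<Rightarrow> int \<Rightarrow> 'm::ab_group_add"
  assumes "n \<le> 0" shows "E2 (\<lambda>r s. G (r - 1) s) n - G (-1) n = E2 G (n - 1)"
proof (cases "n = 0")
  case True
  have e1: "\<And>f::int \<Rightarrow> 'm. sum f {s::int. 0 \<le> 0 - s \<and> 0 \<le> s} = f (0)"
  proof -
    fix f :: "int \<Rightarrow> 'm" have "{s::int. 0 \<le> 0 - s \<and> 0 \<le> s} = {0}" by auto
    thus "sum f {s::int. 0 \<le> 0 - s \<and> 0 \<le> s} = f (0)" by simp
  qed
  have e2: "\<And>f::int \<Rightarrow> 'm. sum f {s::int. 0 - 1 - s < 0 \<and> s < 0} = 0"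
  proof -
    fix f :: "int \<Rightarrow> 'm" have "{s::int. 0 - 1 - s < 0 \<and> s < 0} = {}" by auto
    thus "sum f {s::int. 0 - 1 - s < 0 \<and> s < 0} = 0" by (simp only: sum.empty)
  qed
  show ?thesis using True by (simp add: E2_def psum_s e1[simplified] e2[simplified])
next
  case False
  hence n: "n < 0" using assms by simp
  let ?A = "{s::int. n - s < 0 \<and> s < 0}"
  let ?A' = "{s::int. n - 1 - s < 0 \<and> s < 0}"
  have fin: "finite ?A" by (rule fin_int[of _ "n" "0"]) auto
  have ins: "?A' = insert (n) ?A" "(n) \<notin> ?A" using n by auto
  have L: "E2 (\<lambda>r s. G (r - 1) s) n = - (\<Sum>s\<in>?A. G (n - 1 - s) s)"
    using n by (simp add: E2_def psum_s algebra_simps)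
  have R: "E2 G (n - 1) = - (\<Sum>s\<in>?A'. G (n - 1 - s) s)"
    using n by (simp add: E2_def psum_s algebra_simps)
  have I: "(\<Sum>s\<in>?A'. G (n - 1 - s) s) = G (-1) n + (\<Sum>s\<in>?A. G (n - 1 - s) s)"
    unfolding ins(1) using sum.insert[OF fin ins(2), of "\<lambda>s. G (n - 1 - s) s"] by simp
  show ?thesis unfolding L R I by (simp add: algebra_simps)
qed

lemma E3_up:
  fixes G :: "int \<Rightarrow> int \<Rightarrow> 'm::ab_group_add"
  assumes "0 \<le> n" shows "E3 (\<lambda>r s. G (r + 1) s) n + G 1 n = E3 G (n + 1)"
proof (cases "n = 0")
  case True
  have e1: "\<And>f::int \<Rightarrow> 'm. sum f {s::int. 0 - s \<le> 0 \<and> s \<le> 0} = f (0)"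
  proof -
    fix f :: "int \<Rightarrow> 'm" have "{s::int. 0 - s \<le> 0 \<and> s \<le> 0} = {0}" by auto
    thus "sum f {s::int. 0 - s \<le> 0 \<and> s \<le> 0} = f (0)" by simp
  qed
  have e2: "\<And>f::int \<Rightarrow> 'm. sum f {s::int. 0 < 0 + 1 - s \<and> 0 < s} = 0"
  proof -
    fix f :: "int \<Rightarrow> 'm" have "{s::int. 0 < 0 + 1 - s \<and> 0 < s} = {}" by auto
    thus "sum f {s::int. 0 < 0 + 1 - s \<and> 0 < s} = 0" by (simp only: sum.empty)
  qed
  show ?thesis using True by (simp add: E3_def psum_s e1[simplified] e2[simplified])
next
  case False
  hence n: "0 < n" using assms by simp
  let ?A = "{s::int. 0 < n - s \<and> 0 < s}"
  let ?A' = "{s::int. 0 < n + 1 - s \<and> 0 < s}"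
  have fin: "finite ?A" by (rule fin_int[of _ "0" "n"]) auto
  have ins: "?A' = insert (n) ?A" "(n) \<notin> ?A" using n by auto
  have L: "E3 (\<lambda>r s. G (r + 1) s) n = (\<Sum>s\<in>?A. G (n + 1 - s) s)"
    using n by (simp add: E3_def psum_s algebra_simps)
  have R: "E3 G (n + 1) = (\<Sum>s\<in>?A'. G (n + 1 - s) s)"
    using n by (simp add: E3_def psum_s algebra_simps)
  have I: "(\<Sum>s\<in>?A'. G (n + 1 - s) s) = G 1 n + (\<Sum>s\<in>?A. G (n + 1 - s) s)"
    unfolding ins(1) using sum.insert[OF fin ins(2), of "\<lambda>s. G (n + 1 - s) s"] by simp
  show ?thesis unfolding L R I by (simp add: algebra_simps)
qed

lemma E3_down:
  fixes G :: "int \<Rightarrow> int \<Rightarrow> 'm::ab_group_add"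
  assumes n: "n \<le> 0" shows "E3 (\<lambda>r s. G (r - 1) s) n - G 0 (n - 1) = E3 G (n - 1)"
proof -
  let ?A = "{s::int. n - s \<le> 0 \<and> s \<le> 0}"
  let ?A' = "{s::int. n - 1 - s \<le> 0 \<and> s \<le> 0}"
  have fin: "finite ?A" by (rule fin_int[of _ "n" "0"]) auto
  have ins: "?A' = insert (n - 1) ?A" "(n - 1) \<notin> ?A" using n by auto
  have L: "E3 (\<lambda>r s. G (r - 1) s) n = - (\<Sum>s\<in>?A. G (n - 1 - s) s)"
    using n by (simp add: E3_def psum_s algebra_simps)
  have R: "E3 G (n - 1) = - (\<Sum>s\<in>?A'. G (n - 1 - s) s)"
    using n by (simp add: E3_def psum_s algebra_simps)
  have I: "(\<Sum>s\<in>?A'. G (n - 1 - s) s) = G 0 (n - 1) + (\<Sum>s\<in>?A. G (n - 1 - s) s)"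
    unfolding ins(1) using sum.insert[OF fin ins(2), of "\<lambda>s. G (n - 1 - s) s"] by simp
  show ?thesis unfolding L R I by (simp add: algebra_simps)
qed

lemma E4_up:
  fixes G :: "int \<Rightarrow> int \<Rightarrow> 'm::ab_group_add"
  assumes n: "0 \<le> n" shows "E4 (\<lambda>r s. G r (s + 1)) n - G (n + 1) 0 = E4 G (n + 1)"
proof -
  let ?A = "{r::int. 0 \<le> r \<and> 0 \<le> n - r}"
  let ?A' = "{r::int. 0 \<le> r \<and> 0 \<le> n + 1 - r}"
  have fin: "finite ?A" by (rule fin_int[of _ "0" "n"]) auto
  have ins: "?A' = insert (n + 1) ?A" "(n + 1) \<notin> ?A" using n by auto
  have L: "E4 (\<lambda>r s. G r (s + 1)) n = - (\<Sum>r\<in>?A. G r (n + 1 - r))"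
    using n by (simp add: E4_def psum_r algebra_simps)
  have R: "E4 G (n + 1) = - (\<Sum>r\<in>?A'. G r (n + 1 - r))"
    using n by (simp add: E4_def psum_r algebra_simps)
  have I: "(\<Sum>r\<in>?A'. G r (n + 1 - r)) = G (n + 1) 0 + (\<Sum>r\<in>?A. G r (n + 1 - r))"
    unfolding ins(1) using sum.insert[OF fin ins(2), of "\<lambda>r. G r (n + 1 - r)"] by simp
  show ?thesis unfolding L R I by (simp add: algebra_simps)
qed

lemma E4_down:
  fixes G :: "int \<Rightarrow> int \<Rightarrow> 'm::ab_group_add"
  assumes "n \<le> 0" shows "E4 (\<lambda>r s. G r (s - 1)) n + G n (-1) = E4 G (n - 1)"
proof (cases "n = 0")
  case True
  have e1: "\<And>f::int \<Rightarrow> 'm. sum f {r::int. 0 \<le> r \<and> 0 \<le> 0 - r} = f (0)"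
  proof -
    fix f :: "int \<Rightarrow> 'm" have "{r::int. 0 \<le> r \<and> 0 \<le> 0 - r} = {0}" by auto
    thus "sum f {r::int. 0 \<le> r \<and> 0 \<le> 0 - r} = f (0)" by simp
  qed
  have e2: "\<And>f::int \<Rightarrow> 'm. sum f {r::int. r < 0 \<and> 0 - 1 - r < 0} = 0"
  proof -
    fix f :: "int \<Rightarrow> 'm" have "{r::int. r < 0 \<and> 0 - 1 - r < 0} = {}" by auto
    thus "sum f {r::int. r < 0 \<and> 0 - 1 - r < 0} = 0" by (simp only: sum.empty)
  qed
  show ?thesis using True by (simp add: E4_def psum_r e1[simplified] e2[simplified])
next
  case False
  hence n: "n < 0" using assms by simp
  let ?A = "{r::int. r < 0 \<and> n - r < 0}"
  let ?A' = "{r::int. r < 0 \<and> n - 1 - r < 0}"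
  have fin: "finite ?A" by (rule fin_int[of _ "n" "0"]) auto
  have ins: "?A' = insert (n) ?A" "(n) \<notin> ?A" using n by auto
  have L: "E4 (\<lambda>r s. G r (s - 1)) n = (\<Sum>r\<in>?A. G r (n - 1 - r))"
    using n by (simp add: E4_def psum_r algebra_simps)
  have R: "E4 G (n - 1) = (\<Sum>r\<in>?A'. G r (n - 1 - r))"
    using n by (simp add: E4_def psum_r algebra_simps)
  have I: "(\<Sum>r\<in>?A'. G r (n - 1 - r)) = G n (-1) + (\<Sum>r\<in>?A. G r (n - 1 - r))"
    unfolding ins(1) using sum.insert[OF fin ins(2), of "\<lambda>r. G r (n - 1 - r)"] by simp
  show ?thesis unfolding L R I by (simp add: algebra_simps)
qed


lemma psum_hom:
  fixes \<phi> :: "'m::ab_group_add \<Rightarrow> 'n::ab_group_add"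
  assumes add: "\<And>a b. \<phi> (a + b) = \<phi> a + \<phi> b"
  shows "\<phi> (psum G n Q) = psum (\<lambda>r s. \<phi> (G r s)) n Q"
proof -
  have z: "\<phi> 0 = 0" using add[of 0 0] by simp
  have "\<phi> (psum G n Q) = sum (\<phi> \<circ> (\<lambda>(r, s). G r s)) {(r, s). r + s = n \<and> Q r s}"
    unfolding psum_def by (rule sum_comp_morphism[symmetric]) (auto simp: z add)
  also have "\<dots> = psum (\<lambda>r s. \<phi> (G r s)) n Q"
    unfolding psum_def by (intro sum.cong) auto
  finally show ?thesis .
qed

lemma neg_hom:
  fixes \<phi> :: "'m::ab_group_add \<Rightarrow> 'n::ab_group_add"
  assumes add: "\<And>a b. \<phi> (a + b) = \<phi> a + \<phi> b"
  shows "\<phi> (- a) = - \<phi> a"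
proof -
  have z: "\<phi> 0 = 0" using add[of 0 0] by simp
  have "\<phi> a + \<phi> (- a) = 0" using add[of a "- a"] z by simp
  thus ?thesis by (simp add: eq_neg_iff_add_eq_0 add.commute)
qed

lemma E_hom:
  fixes \<phi> :: "'m::ab_group_add \<Rightarrow> 'n::ab_group_add"
  assumes add: "\<And>a b. \<phi> (a + b) = \<phi> a + \<phi> b"
  shows "\<phi> (E1 G n) = E1 (\<lambda>r s. \<phi> (G r s)) n" "\<phi> (E2 G n) = E2 (\<lambda>r s. \<phi> (G r s)) n"
    "\<phi> (E3 G n) = E3 (\<lambda>r s. \<phi> (G r s)) n" "\<phi> (E4 G n) = E4 (\<lambda>r s. \<phi> (G r s)) n"
  unfolding E1_def E2_def E3_def E4_def
  by (simp_all add: psum_hom[OF add] neg_hom[OF add])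

lemma psum0:
  "psum G 0 (\<lambda>r s. r \<le> 0 \<and> s \<le> 0) = G 0 0" "psum G 0 (\<lambda>r s. 0 \<le> r \<and> 0 \<le> s) = G 0 0"
proof -
  have "{(r, s). r + s = (0::int) \<and> r \<le> 0 \<and> s \<le> 0} = {(0, 0)}" by auto
  thus "psum G 0 (\<lambda>r s. r \<le> 0 \<and> s \<le> 0) = G 0 0" unfolding psum_def by simp
  have "{(r, s). r + s = (0::int) \<and> 0 \<le> r \<and> 0 \<le> s} = {(0, 0)}" by auto
  thus "psum G 0 (\<lambda>r s. 0 \<le> r \<and> 0 \<le> s) = G 0 0" unfolding psum_def by simp
qed

lemma E0: "E1 G 0 = G 0 0" "E2 G 0 = G 0 0" "E3 G 0 = - G 0 0" "E4 G 0 = - G 0 0"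
  unfolding E1_def E2_def E3_def E4_def by (simp_all add: psum0)



declare One_nat_def [simp del]
context qaw_rep begin
lemma cmp_zero_left[simp]: "cmp 0 h = 0"
  using C.cmp_add_left[of 0 0 h] by simp
lemma cmp_zero_right[simp]: "cmp h 0 = 0"
  using C.cmp_add_right[of h 0 0] by simp
lemma cmp_neg_left: "cmp (- f) h = - cmp f h"
  using C.cmp_add_left[of f "-f" h] by (simp add: eq_neg_iff_add_eq_0 add.commute)
lemma cmp_neg_right: "cmp h (- f) = - cmp h f"
  using C.cmp_add_right[of h f "-f"] by (simp add: eq_neg_iff_add_eq_0 add.commute)
lemma cmp_diff_left: "cmp (f - g) h = cmp f h - cmp g h"
  using C.cmp_add_left[of f "-g" h] cmp_neg_left by simp
lemma cmp_diff_right: "cmp h (f - g) = cmp h f - cmp h g"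
  using C.cmp_add_right[of h f "-g"] cmp_neg_right by simp
lemma cmp_sum_left: "cmp (\<Sum>i\<in>I. f i) h = (\<Sum>i\<in>I. cmp (f i) h)"
  using sum_comp_morphism[of "\<lambda>u. cmp u h" f I] C.cmp_add_left by (simp add: o_def)
lemma cmp_sum_right: "cmp h (\<Sum>i\<in>I. f i) = (\<Sum>i\<in>I. cmp h (f i))"
  using sum_comp_morphism[of "\<lambda>u. cmp h u" f I] C.cmp_add_right by (simp add: o_def)
lemma tns_zero_left[simp]: "tns 0 h = 0"
  using C.tns_add_left[of 0 0 h] by simp
lemma tns_zero_right[simp]: "tns h 0 = 0"
  using C.tns_add_right[of h 0 0] by simp
lemma tns_sum_left: "tns (\<Sum>i\<in>I. f i) h = (\<Sum>i\<in>I. tns (f i) h)"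
  using sum_comp_morphism[of "\<lambda>u. tns u h" f I] C.tns_add_left by (simp add: o_def)

lemma mgr_diff: "a \<in> mgr i \<Longrightarrow> b \<in> mgr i \<Longrightarrow> a - b \<in> mgr i"
  using C.subspace_diff[OF C.gr_subspace] by blast

lemma cmp_even: "f \<in> mgr False \<Longrightarrow> g \<in> mgr False \<Longrightarrow> cmp f g \<in> mgr False"
  using C.cmp_gr by fastforce
lemma tns_even: "f \<in> mgr False \<Longrightarrow> g \<in> mgr False \<Longrightarrow> tns f g \<in> mgr False"
  using C.tns_gr by fastforce
lemma hom_cmp: "f \<in> hom cmp idn m n \<Longrightarrow> g \<in> hom cmp idn n p \<Longrightarrow> cmp g f \<in> hom cmp idn m p"
  unfolding hom_def using C.cmp_assoc[of "idn p" g f] C.cmp_assoc[of g f "idn m"] by simp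
lemma homL: "f \<in> hom cmp idn m n \<Longrightarrow> cmp (idn n) f = f" unfolding hom_def by blast
lemma homR: "f \<in> hom cmp idn m n \<Longrightarrow> cmp f (idn m) = f" unfolding hom_def by blast
lemma idn_hom: "idn n \<in> hom cmp idn n n" unfolding hom_def by (simp add: C.idn_orth)

lemma xinv_even: "xinv \<in> mgr False"
proof -
  obtain v0 v1 where v: "v0 \<in> mgr False" "v1 \<in> mgr True" "xinv = v0 + v1"
    using C.gr_sum by blast
  have "cmp x xinv = cmp x v0 + cmp x v1" using v C.cmp_add_right by simp
  hence e: "cmp x v1 = idn 1 - cmp x v0" using x_xinv by (simp add: algebra_simps)
  have "cmp x v1 \<in> mgr True" using C.cmp_gr[OF x_even v(2)] by simp
  moreover have "idn 1 - cmp x v0 \<in> mgr False"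
    using mgr_diff[OF C.idn_even cmp_even[OF x_even v(1)]] by simp
  ultimately have "cmp x v1 \<in> mgr False \<inter> mgr True" using e by simp
  hence z: "cmp x v1 = 0" using C.gr_direct by blast
  hence "cmp x v0 = idn 1" using e by simp
  hence "cmp xinv (cmp x v0) = xinv" using homR[OF xinv_hom] by simp
  hence "cmp (idn 1) v0 = xinv" using xinv_x by (simp add: C.cmp_assoc[symmetric])
  moreover have "cmp (idn 1) v0 \<in> mgr False" by (rule cmp_even[OF C.idn_even v(1)])
  ultimately show ?thesis by simp
qed

lemma funpow_cmp: "cmp (idn 1) y = y \<Longrightarrow> (cmp u ^^ n) y = cmp ((cmp u ^^ n) (idn 1)) y"
  by (induction n) (simp_all add: C.cmp_assoc)
lemma pw_hom: "u \<in> hom cmp idn 1 1 \<Longrightarrow> (cmp u ^^ n) (idn 1) \<in> hom cmp idn 1 1"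
  by (induction n) (simp_all add: idn_hom hom_cmp)
lemma pw_even: "u \<in> mgr False \<Longrightarrow> (cmp u ^^ n) (idn 1) \<in> mgr False"
  by (induction n) (simp_all add: C.idn_even cmp_even)
lemma pw_suc: "u \<in> hom cmp idn 1 1 \<Longrightarrow> (cmp u ^^ Suc n) (idn 1) = cmp ((cmp u ^^ n) (idn 1)) u"
proof -
  assume u: "u \<in> hom cmp idn 1 1"
  have "(cmp u ^^ Suc n) (idn 1) = (cmp u ^^ n) (cmp u (idn 1))" by (simp only: funpow_Suc_right o_def)
  also have "\<dots> = (cmp u ^^ n) u" using homR[OF u] by simp
  also have "\<dots> = cmp ((cmp u ^^ n) (idn 1)) u" using funpow_cmp homL[OF u] by blast
  finally show ?thesis .
qed

abbreviation Xp where "Xp \<equiv> mpow cmp (idn 1) x xinv"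

lemma Xp_hom: "Xp n \<in> hom cmp idn 1 1"
  unfolding mpow_def using pw_hom[OF x_hom] pw_hom[OF xinv_hom] by simp
lemma Xp_even: "Xp n \<in> mgr False"
  unfolding mpow_def using pw_even[OF x_even] pw_even[OF xinv_even] by simp
lemma Xp0: "Xp 0 = idn 1" unfolding mpow_def by simp

lemma Xp_succ: "Xp (b + 1) = cmp (Xp b) x"
proof (cases "0 \<le> b")
  case True
  hence "nat (b + 1) = Suc (nat b)" by simp
  thus ?thesis using True pw_suc[OF x_hom] unfolding mpow_def by simp
next
  case False
  define k where "k = nat (- b - 1)"
  have k: "nat (- b) = Suc k" "nat (- (b+1)) = k" using False unfolding k_def by (simp_all add: nat_eq_iff)
  have "cmp (Xp b) x = cmp (cmp ((cmp xinv ^^ k) (idn 1)) xinv) x"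
    using False k pw_suc[OF xinv_hom] unfolding mpow_def by simp
  also have "\<dots> = (cmp xinv ^^ k) (idn 1)"
    using homR[OF pw_hom[OF xinv_hom]] xinv_x by (simp add: C.cmp_assoc)
  also have "\<dots> = Xp (b + 1)" using False k unfolding mpow_def by (cases "b = -1") auto
  finally show ?thesis by simp
qed


lemma Xp_pred: "Xp (b - 1) = cmp (Xp b) xinv"
proof (cases "b \<le> 0")
  case True
  hence "nat (- (b - 1)) = Suc (nat (- b))" by simp
  thus ?thesis using True pw_suc[OF xinv_hom] unfolding mpow_def by auto
next
  case False
  define k where "k = nat (b - 1)"
  have k: "nat b = Suc k" "nat (b - 1) = k" using False unfolding k_def by (simp_all add: nat_eq_iff)
  have "cmp (Xp b) xinv = cmp (cmp ((cmp x ^^ k) (idn 1)) x) xinv"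
    using False k pw_suc[OF x_hom] unfolding mpow_def by simp
  also have "\<dots> = (cmp x ^^ k) (idn 1)"
    using homR[OF pw_hom[OF x_hom]] x_xinv by (simp add: C.cmp_assoc)
  also have "\<dots> = Xp (b - 1)" using False k unfolding mpow_def by auto
  finally show ?thesis by simp
qed

lemma Xp_add: "cmp (Xp a) (Xp b) = Xp (a + b)"
proof (induction b rule: int_induct[where k = 0])
  case base
  then show ?case using homR[OF Xp_hom] Xp0 by simp
next
  case (step1 i)
  have "cmp (Xp a) (Xp (i + 1)) = cmp (cmp (Xp a) (Xp i)) x" by (simp add: Xp_succ C.cmp_assoc)
  also have "\<dots> = Xp (a + i + 1)" using step1 Xp_succ by simp
  finally show ?case by (simp add: add.assoc)
next
  case (step2 i)
  have "cmp (Xp a) (Xp (i - 1)) = cmp (cmp (Xp a) (Xp i)) xinv" by (simp add: Xp_pred C.cmp_assoc)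
  also have "\<dots> = Xp (a + i - 1)" using step2 Xp_pred by simp
  finally show ?case by (simp add: algebra_simps)
qed

lemma xinv_tau: "cmp xinv (tau a) = cmp (tau a) xinv"
proof -
  have "cmp xinv (tau a) = cmp xinv (cmp (tau a) (cmp x xinv))" using homR[OF tau_hom] x_xinv by simp
  also have "\<dots> = cmp xinv (cmp (cmp x (tau a)) xinv)" using x_tau by (simp add: C.cmp_assoc)
  also have "\<dots> = cmp (cmp (cmp xinv x) (tau a)) xinv" by (simp add: C.cmp_assoc)
  also have "\<dots> = cmp (tau a) xinv" using homL[OF tau_hom] xinv_x by simp
  finally show ?thesis .
qed

lemma Xp_tau: "cmp (Xp n) (tau a) = cmp (tau a) (Xp n)"
proof (induction n rule: int_induct[where k = 0])
  case base
  then show ?case using homR[OF tau_hom] homL[OF tau_hom] Xp0 by simp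
next
  case (step1 i)
  have "cmp (Xp (i + 1)) (tau a) = cmp (Xp i) (cmp (tau a) x)" by (simp add: Xp_succ C.cmp_assoc x_tau)
  also have "\<dots> = cmp (tau a) (Xp (i + 1))" using step1 by (simp add: Xp_succ C.cmp_assoc[symmetric])
  finally show ?case .
next
  case (step2 i)
  have "cmp (Xp (i - 1)) (tau a) = cmp (Xp i) (cmp (tau a) xinv)" by (simp add: Xp_pred C.cmp_assoc xinv_tau)
  also have "\<dots> = cmp (tau a) (Xp (i - 1))" using step2 by (simp add: Xp_pred C.cmp_assoc[symmetric])
  finally show ?case .
qed


lemma ichg:
  assumes "f \<in> hom cmp idn 1 1" "f' \<in> hom cmp idn 1 1" "g \<in> hom cmp idn 1 1" "g' \<in> hom cmp idn 1 1"
    "f \<in> mgr i" "g \<in> mgr j" "\<not> (i \<and> j)"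
  shows "cmp (tns f' g) (tns f g') = tns (cmp f' f) (cmp g g')"
  using C.super_interchange[OF assms(1,2,4,3,5,6)] assms(7) by simp

lemma tau_split: "\<exists>a0 a1. tau a = tau a0 + tau a1 \<and> tau a0 \<in> mgr False \<and> tau a1 \<in> mgr True"
proof -
  obtain a0 a1 where "a0 \<in> agr False" "a1 \<in> agr True" "a = a0 + a1" using A.gr_sum by blast
  thus ?thesis using tau_add tau_gr by blast
qed

lemma K1:
  assumes "p \<in> hom cmp idn 1 1" "q \<in> hom cmp idn 1 1" "u \<in> hom cmp idn 1 1" "p \<in> mgr False"
  shows "cmp (tns u (tau a)) (tns p q) = tns (cmp u p) (cmp (tau a) q)"
proof -
  obtain a0 a1 where a: "tau a = tau a0 + tau a1" "tau a0 \<in> mgr False" "tau a1 \<in> mgr True"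
    using tau_split by blast
  have "cmp (tns u (tau a)) (tns p q) = cmp (tns u (tau a0)) (tns p q) + cmp (tns u (tau a1)) (tns p q)"
    using a(1) by (simp add: C.tns_add_right C.cmp_add_left)
  also have "\<dots> = tns (cmp u p) (cmp (tau a0) q) + tns (cmp u p) (cmp (tau a1) q)"
    using ichg[OF assms(1) assms(3) tau_hom assms(2) assms(4) a(2)]
          ichg[OF assms(1) assms(3) tau_hom assms(2) assms(4) a(3)] by simp
  also have "\<dots> = tns (cmp u p) (cmp (tau a) q)"
    using a(1) by (simp add: C.tns_add_right C.cmp_add_left)
  finally show ?thesis .
qed

lemma K2:
  assumes "p \<in> hom cmp idn 1 1" "q \<in> hom cmp idn 1 1" "v \<in> hom cmp idn 1 1" "q \<in> mgr False"
  shows "cmp (tns p q) (tns (tau a) v) = tns (cmp p (tau a)) (cmp q v)"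
proof -
  obtain a0 a1 where a: "tau a = tau a0 + tau a1" "tau a0 \<in> mgr False" "tau a1 \<in> mgr True"
    using tau_split by blast
  have "cmp (tns p q) (tns (tau a) v) = cmp (tns p q) (tns (tau a0) v) + cmp (tns p q) (tns (tau a1) v)"
    using a(1) by (simp add: C.tns_add_left C.cmp_add_right)
  also have "\<dots> = tns (cmp p (tau a0)) (cmp q v) + tns (cmp p (tau a1)) (cmp q v)"
    using ichg[OF tau_hom assms(1) assms(2) assms(3) a(2) assms(4)]
          ichg[OF tau_hom assms(1) assms(2) assms(3) a(3) assms(4)] by simp
  also have "\<dots> = tns (cmp p (tau a)) (cmp q v)"
    using a(1) by (simp add: C.tns_add_left C.cmp_add_right)
  finally show ?thesis .
qed

abbreviation TT where "TT \<equiv> mscale z (\<Sum>b\<in>B. tns (tau b) (tau (dual b)))"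
abbreviation P where "P a b \<equiv> tns (Xp a) (Xp b)"

lemma T_comm:
  assumes "p \<in> hom cmp idn 1 1" "q \<in> hom cmp idn 1 1" "p \<in> mgr False" "q \<in> mgr False"
    "\<And>a. cmp p (tau a) = cmp (tau a) p" "\<And>a. cmp q (tau a) = cmp (tau a) q"
  shows "cmp TT (tns p q) = cmp (tns p q) TT"
proof -
  have "\<And>b. cmp (tns (tau b) (tau (dual b))) (tns p q) = cmp (tns p q) (tns (tau b) (tau (dual b)))"
    using K1[OF assms(1,2) tau_hom assms(3)] K2[OF assms(1,2) tau_hom assms(4)] assms(5,6) by simp
  thus ?thesis by (simp add: C.cmp_scale_left C.cmp_scale_right cmp_sum_left cmp_sum_right)
qed

lemma P_mult: "cmp (P a b) (P c d) = P (a + c) (b + d)"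
  using ichg[OF Xp_hom Xp_hom Xp_hom Xp_hom Xp_even Xp_even] by (simp add: Xp_add)

lemma P00: "P 0 0 = idn 2"
  using C.tns_idn[of 1 1] by (simp add: Xp0)

lemma PT: "cmp (P a b) TT = cmp TT (P a b)"
  using T_comm[OF Xp_hom Xp_hom Xp_even Xp_even Xp_tau Xp_tau] by simp

lemma T_homL: "cmp (idn 2) TT = TT"
proof -
  have "\<And>b. cmp (idn 2) (tns (tau b) (tau (dual b))) = tns (tau b) (tau (dual b))"
    using homL[OF C.tns_hom[OF tau_hom tau_hom]] by simp
  thus ?thesis by (simp add: C.cmp_scale_right cmp_sum_right)
qed

lemma T_homR: "cmp TT (idn 2) = TT"
proof -
  have "\<And>b. cmp (tns (tau b) (tau (dual b))) (idn 2) = tns (tau b) (tau (dual b))"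
    using homR[OF C.tns_hom[OF tau_hom tau_hom]] by simp
  thus ?thesis by (simp add: C.cmp_scale_left cmp_sum_left)
qed

lemma Xp1: "Xp 1 = x" using Xp_succ[of 0] Xp0 homL[OF x_hom] by simp
lemma Xpm1: "Xp (-1) = xinv" using Xp_pred[of 0] Xp0 homL[OF xinv_hom] by simp

lemma S_hom2: "cmp S (idn 2) = S" "cmp (idn 2) S = S" using S_hom unfolding hom_def by auto
lemma Sm_hom2: "cmp Sm (idn 2) = Sm" "cmp (idn 2) Sm = Sm" using Sm_hom unfolding hom_def by auto

lemma B1: "cmp S (P 0 1) = cmp (P 1 0) Sm" using S_x by (simp add: Xp0 Xp1)
lemma B2: "cmp Sm (P 1 0) = cmp (P 0 1) S" using Sm_x by (simp add: Xp0 Xp1)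
lemma B3: "cmp Sm (P 0 (-1)) = cmp (P (-1) 0) S"
proof -
  have "cmp (P (-1) 0) (cmp S (P 0 1)) = Sm"
    using B1 P_mult[of "-1" 0 1 0] by (simp add: C.cmp_assoc[symmetric] P00 Sm_hom2)
  hence "cmp (cmp (P (-1) 0) (cmp S (P 0 1))) (P 0 (-1)) = cmp Sm (P 0 (-1))" by simp
  thus ?thesis using P_mult[of 0 1 0 "-1"] by (simp add: C.cmp_assoc P00 S_hom2)
qed
lemma B4: "cmp S (P (-1) 0) = cmp (P 0 (-1)) Sm"
proof -
  have "cmp (P 0 (-1)) (cmp Sm (P 1 0)) = S"
    using B2 P_mult[of 0 "-1" 0 1] by (simp add: C.cmp_assoc[symmetric] P00 S_hom2)
  hence "cmp (cmp (P 0 (-1)) (cmp Sm (P 1 0))) (P (-1) 0) = cmp S (P (-1) 0)" by simp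
  thus ?thesis using P_mult[of 1 0 "-1" 0] by (simp add: C.cmp_assoc P00 Sm_hom2)
qed


abbreviation GG where "GG r s \<equiv> cmp (P r s) TT"

lemma Sm_eq: "Sm = S - TT" using skein by (simp add: algebra_simps)
lemma S_eq: "S = Sm + TT" using skein by (simp add: algebra_simps)

lemma GG_P: "cmp (GG r s) (P a b) = GG (r + a) (s + b)"
  by (simp add: C.cmp_assoc PT[symmetric] C.cmp_assoc[symmetric] P_mult)
lemma P_GG: "cmp (P a b) (GG r s) = GG (a + r) (b + s)"
  by (simp add: C.cmp_assoc[symmetric] P_mult)
lemma P_T: "cmp (P a b) TT = GG a b" by simp
lemma PPh: "cmp (P a b) (cmp (P c d) h) = cmp (P (a + c) (b + d)) h"
  by (simp add: C.cmp_assoc[symmetric] P_mult)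
lemma T0: "GG 0 0 = TT" by (simp add: P00 T_homL)

lemma addL: "\<And>a b. cmp (a + b) h = cmp a h + cmp b h" by (rule C.cmp_add_left)

lemma cmpE: "cmp (E1 G n) h = E1 (\<lambda>r s. cmp (G r s) h) n" "cmp (E2 G n) h = E2 (\<lambda>r s. cmp (G r s) h) n"
  "cmp (E3 G n) h = E3 (\<lambda>r s. cmp (G r s) h) n" "cmp (E4 G n) h = E4 (\<lambda>r s. cmp (G r s) h) n"
  using E_hom[of "\<lambda>a. cmp a h" G n] C.cmp_add_left by simp_all

lemma Q1: "cmp S (P 0 n) = cmp (P n 0) Sm + E1 GG n"
proof (induction n rule: int_induct[where k = 0])
  case base
  then show ?case by (simp add: E0 T0 P00 S_hom2 Sm_hom2 S_eq C.cmp_add_left T_homR T_homL)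
next
  case (step1 i)
  have "cmp S (P 0 (i + 1)) = cmp (cmp S (P 0 i)) (P 0 1)" by (simp add: C.cmp_assoc P_mult)
  also have "\<dots> = cmp (P i 0) (cmp Sm (P 0 1)) + cmp (E1 GG i) (P 0 1)"
    by (simp add: step1 C.cmp_add_left C.cmp_assoc)
  also have "cmp Sm (P 0 1) = cmp (P 1 0) Sm - cmp (P 0 1) TT"
    by (simp add: Sm_eq[of] cmp_diff_left B1[folded Sm_eq] PT)
  also have "cmp (E1 GG i) (P 0 1) = E1 (\<lambda>r s. GG r (s + 1)) i"
    by (simp add: cmpE GG_P)
  finally have "cmp S (P 0 (i + 1)) = cmp (P (i + 1) 0) Sm + (E1 (\<lambda>r s. GG r (s + 1)) i - GG i 1)"
    by (simp add: cmp_diff_right PPh)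
  thus ?case using E1_up[OF step1(1), of GG] by simp
next
  case (step2 i)
  have "cmp S (P 0 (i - 1)) = cmp (cmp S (P 0 i)) (P 0 (-1))" by (simp add: C.cmp_assoc P_mult)
  also have "\<dots> = cmp (P i 0) (cmp Sm (P 0 (-1))) + cmp (E1 GG i) (P 0 (-1))"
    by (simp add: step2 C.cmp_add_left C.cmp_assoc)
  also have "cmp Sm (P 0 (-1)) = cmp (P (-1) 0) Sm + cmp (P (-1) 0) TT"
    by (simp add: B3 S_eq C.cmp_add_right)
  also have "cmp (E1 GG i) (P 0 (-1)) = E1 (\<lambda>r s. GG r (s - 1)) i"
    by (simp add: cmpE GG_P)
  finally have "cmp S (P 0 (i - 1)) = cmp (P (i - 1) 0) Sm + (E1 (\<lambda>r s. GG r (s - 1)) i + GG (i - 1) 0)"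
    by (simp add: C.cmp_add_right PPh)
  thus ?case using E1_down[OF step2(1), of GG] by simp
qed


lemma H1: "cmp Sm (P 0 1) = cmp (P 1 0) Sm - cmp (P 0 1) TT"
  by (simp add: Sm_eq[of] cmp_diff_left B1[folded Sm_eq] PT)
lemma H2: "cmp Sm (P 1 0) = cmp (P 0 1) Sm + cmp (P 0 1) TT"
  by (simp add: B2 S_eq C.cmp_add_right)
lemma H3: "cmp Sm (P (-1) 0) = cmp (P 0 (-1)) Sm - cmp (P (-1) 0) TT"
  by (simp add: Sm_eq cmp_diff_left cmp_diff_right B4 PT)
lemma H4: "cmp S (P 1 0) = cmp (P 0 1) S + cmp (P 1 0) TT"
  by (simp add: S_eq C.cmp_add_left C.cmp_add_right B2 PT)
lemma H5: "cmp S (P (-1) 0) = cmp (P 0 (-1)) S - cmp (P 0 (-1)) TT"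
  by (simp add: B4 Sm_eq cmp_diff_right)
lemma H6: "cmp S (P 0 1) = cmp (P 1 0) S - cmp (P 1 0) TT"
  by (simp add: B1 Sm_eq cmp_diff_right)
lemma H7: "cmp S (P 0 (-1)) = cmp (P (-1) 0) S + cmp (P 0 (-1)) TT"
  by (simp add: S_eq C.cmp_add_left C.cmp_add_right B3 PT)
lemma H0: "cmp Sm (P 0 (-1)) = cmp (P (-1) 0) Sm + cmp (P (-1) 0) TT"
  by (simp add: B3 S_eq C.cmp_add_right)

lemma Q2: "cmp S (P n 0) = cmp (P 0 n) Sm + E2 GG n"
proof (induction n rule: int_induct[where k = 0])
  case base
  then show ?case using S_hom2 Sm_hom2 by (simp add: E0 T0 P00 S_eq T_homL T_homR)
next
  case (step1 i)
  have "cmp S (P (i + 1) 0) = cmp (cmp S (P i 0)) (P 1 0)" by (simp add: C.cmp_assoc P_mult)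
  also have "\<dots> = cmp (P 0 i) (cmp Sm (P 1 0)) + cmp (E2 GG i) (P 1 0)"
    by (simp add: step1 C.cmp_add_left C.cmp_assoc)
  also have "cmp Sm (P 1 0) = cmp (P 0 1) Sm + cmp (P 0 1) TT" by (rule H2)
  also have "cmp (E2 GG i) (P 1 0) = E2 (\<lambda>r s. GG (r + 1) s) i"
    by (simp add: cmpE GG_P)
  finally have "cmp S (P (i + 1) 0) = cmp (P 0 (i + 1)) Sm + (E2 (\<lambda>r s. GG (r + 1) s) i + GG 0 (i + 1))"
    by (simp add: cmp_diff_right C.cmp_add_right PPh algebra_simps)
  thus ?case using E2_up[OF step1(1), of GG] by simp
next
  case (step2 i)
  have "cmp S (P (i - 1) 0) = cmp (cmp S (P i 0)) (P (-1) 0)" by (simp add: C.cmp_assoc P_mult)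
  also have "\<dots> = cmp (P 0 i) (cmp Sm (P (-1) 0)) + cmp (E2 GG i) (P (-1) 0)"
    by (simp add: step2 C.cmp_add_left C.cmp_assoc)
  also have "cmp Sm (P (-1) 0) = cmp (P 0 (-1)) Sm - cmp (P (-1) 0) TT" by (rule H3)
  also have "cmp (E2 GG i) (P (-1) 0) = E2 (\<lambda>r s. GG (r - 1) s) i"
    by (simp add: cmpE GG_P)
  finally have "cmp S (P (i - 1) 0) = cmp (P 0 (i - 1)) Sm + (E2 (\<lambda>r s. GG (r - 1) s) i - GG (-1) i)"
    by (simp add: cmp_diff_right C.cmp_add_right PPh algebra_simps)
  thus ?case using E2_down[OF step2(1), of GG] by simp
qed

lemma Q3: "cmp Sm (P n 0) = cmp (P 0 n) S + E3 GG n"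
proof (induction n rule: int_induct[where k = 0])
  case base
  then show ?case using S_hom2 Sm_hom2 by (simp add: E0 T0 P00 S_eq T_homL T_homR)
next
  case (step1 i)
  have "cmp Sm (P (i + 1) 0) = cmp (cmp Sm (P i 0)) (P 1 0)" by (simp add: C.cmp_assoc P_mult)
  also have "\<dots> = cmp (P 0 i) (cmp S (P 1 0)) + cmp (E3 GG i) (P 1 0)"
    by (simp add: step1 C.cmp_add_left C.cmp_assoc)
  also have "cmp S (P 1 0) = cmp (P 0 1) S + cmp (P 1 0) TT" by (rule H4)
  also have "cmp (E3 GG i) (P 1 0) = E3 (\<lambda>r s. GG (r + 1) s) i"
    by (simp add: cmpE GG_P)
  finally have "cmp Sm (P (i + 1) 0) = cmp (P 0 (i + 1)) S + (E3 (\<lambda>r s. GG (r + 1) s) i + GG 1 i)"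
    by (simp add: cmp_diff_right C.cmp_add_right PPh algebra_simps)
  thus ?case using E3_up[OF step1(1), of GG] by simp
next
  case (step2 i)
  have "cmp Sm (P (i - 1) 0) = cmp (cmp Sm (P i 0)) (P (-1) 0)" by (simp add: C.cmp_assoc P_mult)
  also have "\<dots> = cmp (P 0 i) (cmp S (P (-1) 0)) + cmp (E3 GG i) (P (-1) 0)"
    by (simp add: step2 C.cmp_add_left C.cmp_assoc)
  also have "cmp S (P (-1) 0) = cmp (P 0 (-1)) S - cmp (P 0 (-1)) TT" by (rule H5)
  also have "cmp (E3 GG i) (P (-1) 0) = E3 (\<lambda>r s. GG (r - 1) s) i"
    by (simp add: cmpE GG_P)
  finally have "cmp Sm (P (i - 1) 0) = cmp (P 0 (i - 1)) S + (E3 (\<lambda>r s. GG (r - 1) s) i - GG 0 (i - 1))"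
    by (simp add: cmp_diff_right C.cmp_add_right PPh algebra_simps)
  thus ?case using E3_down[OF step2(1), of GG] by simp
qed

lemma Q4: "cmp Sm (P 0 n) = cmp (P n 0) S + E4 GG n"
proof (induction n rule: int_induct[where k = 0])
  case base
  then show ?case using S_hom2 Sm_hom2 by (simp add: E0 T0 P00 S_eq T_homL T_homR)
next
  case (step1 i)
  have "cmp Sm (P 0 (i + 1)) = cmp (cmp Sm (P 0 i)) (P 0 1)" by (simp add: C.cmp_assoc P_mult)
  also have "\<dots> = cmp (P i 0) (cmp S (P 0 1)) + cmp (E4 GG i) (P 0 1)"
    by (simp add: step1 C.cmp_add_left C.cmp_assoc)
  also have "cmp S (P 0 1) = cmp (P 1 0) S - cmp (P 1 0) TT" by (rule H6)
  also have "cmp (E4 GG i) (P 0 1) = E4 (\<lambda>r s. GG r (s + 1)) i"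
    by (simp add: cmpE GG_P)
  finally have "cmp Sm (P 0 (i + 1)) = cmp (P (i + 1) 0) S + (E4 (\<lambda>r s. GG r (s + 1)) i - GG (i + 1) 0)"
    by (simp add: cmp_diff_right C.cmp_add_right PPh algebra_simps)
  thus ?case using E4_up[OF step1(1), of GG] by simp
next
  case (step2 i)
  have "cmp Sm (P 0 (i - 1)) = cmp (cmp Sm (P 0 i)) (P 0 (-1))" by (simp add: C.cmp_assoc P_mult)
  also have "\<dots> = cmp (P i 0) (cmp S (P 0 (-1))) + cmp (E4 GG i) (P 0 (-1))"
    by (simp add: step2 C.cmp_add_left C.cmp_assoc)
  also have "cmp S (P 0 (-1)) = cmp (P (-1) 0) S + cmp (P 0 (-1)) TT" by (rule H7)
  also have "cmp (E4 GG i) (P 0 (-1)) = E4 (\<lambda>r s. GG r (s - 1)) i"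
    by (simp add: cmpE GG_P)
  finally have "cmp Sm (P 0 (i - 1)) = cmp (P (i - 1) 0) S + (E4 (\<lambda>r s. GG r (s - 1)) i + GG i (-1))"
    by (simp add: cmp_diff_right C.cmp_add_right PPh algebra_simps)
  thus ?case using E4_down[OF step2(1), of GG] by simp
qed

end

theorem lemma3p1:
  fixes ascale :: "'k::comm_ring_1 \<Rightarrow> 'a::ring_1 \<Rightarrow> 'a"
    and mscale :: "'k \<Rightarrow> 'm::ab_group_add \<Rightarrow> 'm"
    and n :: int
  assumes "qaw_rep ascale agr tr B dual mscale mgr idn cmp tns z S Sm x xinv tau"
  defines "T \<equiv> mscale z (\<Sum>b\<in>B. tns (tau b) (tau (dual b)))"
    and "X \<equiv> mpow cmp (idn 1) x xinv"
  shows
   "(0 < n \<longrightarrow> cmp S (tns (idn 1) (X n)) = cmp (tns (X n) (idn 1)) Sm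
       - (\<Sum>(r, s)\<in>{(r, s). r + s = n \<and> 0 < r \<and> 0 < s}. cmp (tns (X r) (X s)) T)) \<and>
    (n \<le> 0 \<longrightarrow> cmp S (tns (idn 1) (X n)) = cmp (tns (X n) (idn 1)) Sm
       + (\<Sum>(r, s)\<in>{(r, s). r + s = n \<and> r \<le> 0 \<and> s \<le> 0}. cmp (tns (X r) (X s)) T)) \<and>
    (0 \<le> n \<longrightarrow> cmp S (tns (X n) (idn 1)) = cmp (tns (idn 1) (X n)) Sm
       + (\<Sum>(r, s)\<in>{(r, s). r + s = n \<and> 0 \<le> r \<and> 0 \<le> s}. cmp (tns (X r) (X s)) T)) \<and>
    (n < 0 \<longrightarrow> cmp S (tns (X n) (idn 1)) = cmp (tns (idn 1) (X n)) Sm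
       - (\<Sum>(r, s)\<in>{(r, s). r + s = n \<and> r < 0 \<and> s < 0}. cmp (tns (X r) (X s)) T)) \<and>
    (0 < n \<longrightarrow> cmp Sm (tns (X n) (idn 1)) = cmp (tns (idn 1) (X n)) S
       + (\<Sum>(r, s)\<in>{(r, s). r + s = n \<and> 0 < r \<and> 0 < s}. cmp (tns (X r) (X s)) T)) \<and>
    (n \<le> 0 \<longrightarrow> cmp Sm (tns (X n) (idn 1)) = cmp (tns (idn 1) (X n)) S
       - (\<Sum>(r, s)\<in>{(r, s). r + s = n \<and> r \<le> 0 \<and> s \<le> 0}. cmp (tns (X r) (X s)) T)) \<and>
    (0 \<le> n \<longrightarrow> cmp Sm (tns (idn 1) (X n)) = cmp (tns (X n) (idn 1)) S
       - (\<Sum>(r, s)\<in>{(r, s). r + s = n \<and> 0 \<le> r \<and> 0 \<le> s}. cmp (tns (X r) (X s)) T)) \<and>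
    (n < 0 \<longrightarrow> cmp Sm (tns (idn 1) (X n)) = cmp (tns (X n) (idn 1)) S
       + (\<Sum>(r, s)\<in>{(r, s). r + s = n \<and> r < 0 \<and> s < 0}. cmp (tns (X r) (X s)) T))"
proof -
  interpret q: qaw_rep ascale agr tr B dual mscale mgr idn cmp tns z S Sm x xinv tau
    by (rule assms(1))
  note q1 = q.Q1[of n] and q2 = q.Q2[of n] and q3 = q.Q3[of n] and q4 = q.Q4[of n]
  show ?thesis unfolding T_def X_def using q1 q2 q3 q4
    by (auto simp: E1_def E2_def E3_def E4_def psum_def q.Xp0)
qed

end
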